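(* Let $(W,S)$ be a Coxeter system with $S$ finite, $\phi:\operatorname{Ad}(Q_W)\to W$ the homomorphism $e_x\mapsto x$, and $C_W=\ker\phi$. If $x,y\in Q_W$ are conjugate in $W$, then $e_x^2=e_y^2$, and this element lies in $C_W$.
   Context: A Coxeter system $(W,S)$: $S$ finite, $m:S\times S\to\mathbb{N}\cup\{\infty\}$ with $m(s,s)=1$, $2\le m(s,t)=m(t,s)\le\infty$ for $s\ne t$, $W=\langle s\in S\mid (st)^{m(s,t)}=1\ (m(s,t)<\infty)\rangle$. The Coxeter quandle is $Q_W=\bigcup_{w\in W}w^{-1}Sw$ with $x\ast y=yxy$, and $\operatorname{Ad}(Q_W)=\langle e_x\ (x\in Q_W)\mid e_y^{-1}e_xe_y=e_{x\ast y}\rangle$. *)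

theory Defs
  imports "HOL-Algebra.Coset" "HOL-Library.Extended_Nat"
begin

text \<open>A word over generators of type 'g is a list of letters (g, b); b = True means
  the inverse letter g^-1.\<close>

type_synonym 'g word = "('g \<times> bool) list"

inductive pg_eq :: "'g word set \<Rightarrow> 'g word \<Rightarrow> 'g word \<Rightarrow> bool" for R where
  pg_refl: "pg_eq R w w"
| pg_sym: "pg_eq R u v \<Longrightarrow> pg_eq R v u"
| pg_trans: "pg_eq R u v \<Longrightarrow> pg_eq R v w \<Longrightarrow> pg_eq R u w"
| pg_cancel: "pg_eq R (u @ [(g, b), (g, \<not> b)] @ v) (u @ v)"
| pg_rel: "r \<in> R \<Longrightarrow> pg_eq R (u @ r @ v) (u @ v)"

definition pg_class :: "'g word set \<Rightarrow> 'g word \<Rightarrow> 'g word set" where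
  "pg_class R w = {v. pg_eq R w v}"

definition presented_group :: "'g set \<Rightarrow> 'g word set \<Rightarrow> 'g word set monoid" where
  "presented_group G R =
     \<lparr> carrier = {pg_class R w | w. set (map fst w) \<subseteq> G},
       mult = (\<lambda>A B. {w. \<exists>u\<in>A. \<exists>v\<in>B. pg_eq R (u @ v) w}),
       one = pg_class R [] \<rparr>"

definition pg_gen :: "'g word set \<Rightarrow> 'g \<Rightarrow> 'g word set" where
  "pg_gen R g = pg_class R [(g, False)]"

definition word_eval :: "('b, 'c) monoid_scheme \<Rightarrow> ('g \<Rightarrow> 'b) \<Rightarrow> 'g word \<Rightarrow> 'b" where
  "word_eval H f w =
     foldr (\<lambda>(g, b) acc. (if b then inv\<^bsub>H\<^esub> (f g) else f g) \<otimes>\<^bsub>H\<^esub> acc) w \<one>\<^bsub>H\<^esub>"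

definition pg_induced :: "'g set \<Rightarrow> ('b, 'c) monoid_scheme \<Rightarrow> ('g \<Rightarrow> 'b) \<Rightarrow> 'g word set \<Rightarrow> 'b" where
  "pg_induced G H f A = word_eval H f (SOME w. w \<in> A \<and> set (map fst w) \<subseteq> G)"

definition coxeter_matrix :: "'a set \<Rightarrow> ('a \<Rightarrow> 'a \<Rightarrow> enat) \<Rightarrow> bool" where
  "coxeter_matrix S m \<longleftrightarrow> finite S \<and>
     (\<forall>s\<in>S. m s s = 1) \<and>
     (\<forall>s\<in>S. \<forall>t\<in>S. s \<noteq> t \<longrightarrow> 2 \<le> m s t \<and> m s t = m t s)"

text \<open>Relators (st)^m(s,t) for m(s,t) finite (for s = t this gives s^2).\<close>
definition coxeter_relators :: "'a set \<Rightarrow> ('a \<Rightarrow> 'a \<Rightarrow> enat) \<Rightarrow> 'a word set" where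
  "coxeter_relators S m =
     {concat (replicate k [(s, False), (t, False)]) | s t k. s \<in> S \<and> t \<in> S \<and> m s t = enat k}"

definition coxeter_group :: "'a set \<Rightarrow> ('a \<Rightarrow> 'a \<Rightarrow> enat) \<Rightarrow> 'a word set monoid" where
  "coxeter_group S m = presented_group S (coxeter_relators S m)"

definition cox_gen :: "'a set \<Rightarrow> ('a \<Rightarrow> 'a \<Rightarrow> enat) \<Rightarrow> 'a \<Rightarrow> 'a word set" where
  "cox_gen S m s = pg_gen (coxeter_relators S m) s"

definition coxeter_quandle :: "'a set \<Rightarrow> ('a \<Rightarrow> 'a \<Rightarrow> enat) \<Rightarrow> 'a word set set" where
  "coxeter_quandle S m =
     {inv\<^bsub>coxeter_group S m\<^esub> w \<otimes>\<^bsub>coxeter_group S m\<^esub> cox_gen S m s \<otimes>\<^bsub>coxeter_group S m\<^esub> w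
      | w s. w \<in> carrier (coxeter_group S m) \<and> s \<in> S}"

definition cq_op :: "'a set \<Rightarrow> ('a \<Rightarrow> 'a \<Rightarrow> enat) \<Rightarrow> 'a word set \<Rightarrow> 'a word set \<Rightarrow> 'a word set" where
  "cq_op S m x y = y \<otimes>\<^bsub>coxeter_group S m\<^esub> x \<otimes>\<^bsub>coxeter_group S m\<^esub> y"

definition adj_relators :: "'a set \<Rightarrow> ('a \<Rightarrow> 'a \<Rightarrow> enat) \<Rightarrow> 'a word set word set" where
  "adj_relators S m =
     {[(y, True), (x, False), (y, False), (cq_op S m x y, True)] | x y.
        x \<in> coxeter_quandle S m \<and> y \<in> coxeter_quandle S m}"

definition adj_group :: "'a set \<Rightarrow> ('a \<Rightarrow> 'a \<Rightarrow> enat) \<Rightarrow> 'a word set word set monoid" where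
  "adj_group S m = presented_group (coxeter_quandle S m) (adj_relators S m)"

definition adj_gen :: "'a set \<Rightarrow> ('a \<Rightarrow> 'a \<Rightarrow> enat) \<Rightarrow> 'a word set \<Rightarrow> 'a word set word set" where
  "adj_gen S m x = pg_gen (adj_relators S m) x"

definition adj_phi :: "'a set \<Rightarrow> ('a \<Rightarrow> 'a \<Rightarrow> enat) \<Rightarrow> 'a word set word set \<Rightarrow> 'a word set" where
  "adj_phi S m = pg_induced (coxeter_quandle S m) (coxeter_group S m) id"

end

theory Submission
  imports Defs
begin

lemma pg_eq_cong: "pg_eq R u v \<Longrightarrow> pg_eq R (p @ u @ q) (p @ v @ q)"
proof (induction rule: pg_eq.induct)
  case (pg_refl w) then show ?case by (rule pg_eq.pg_refl)
next
  case (pg_sym u v) then show ?case by (metis pg_eq.pg_sym)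
next
  case (pg_trans u v w) then show ?case by (metis pg_eq.pg_trans)
next
  case (pg_cancel u g b v)
  show ?case using pg_eq.pg_cancel[of R "p @ u" g b "v @ q"] by simp
next
  case (pg_rel r u v)
  show ?case using pg_eq.pg_rel[OF pg_rel, of "p @ u" "v @ q"] by simp
qed

lemma pg_eq_app: "pg_eq R u u' \<Longrightarrow> pg_eq R v v' \<Longrightarrow> pg_eq R (u @ v) (u' @ v')"
  by (metis pg_eq.pg_trans pg_eq_cong append_Nil append_Nil2)

lemma pg_class_eq: "pg_class R u = pg_class R v \<longleftrightarrow> pg_eq R u v"
  unfolding pg_class_def
  by (auto intro: pg_eq.pg_refl) (metis pg_eq.pg_sym pg_eq.pg_trans)+

lemma pg_mult: "mult (presented_group G R) (pg_class R u) (pg_class R v) = pg_class R (u @ v)"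
  unfolding presented_group_def pg_class_def
  by (auto intro: pg_eq.pg_refl) (metis pg_eq.pg_trans pg_eq_app)

lemma pg_one: "one (presented_group G R) = pg_class R []"
  by (simp add: presented_group_def)

lemma pg_carrier: "carrier (presented_group G R) = {pg_class R w | w. set (map fst w) \<subseteq> G}"
  by (simp add: presented_group_def)

definition winv :: "'g word \<Rightarrow> 'g word" where
  "winv w = rev (map (\<lambda>(g, b). (g, \<not> b)) w)"

lemma winv_cancel: "pg_eq R (winv w @ w) []"
proof (induction w)
  case Nil then show ?case by (simp add: winv_def pg_eq.pg_refl)
next
  case (Cons a w)
  obtain g b where a: "a = (g, b)" by fastforce
  have "winv (a # w) @ a # w = winv w @ [(g, \<not> b), (g, \<not>\<not> b)] @ w"
    by (simp add: winv_def a)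
  moreover have "pg_eq R (winv w @ [(g, \<not> b), (g, \<not>\<not> b)] @ w) (winv w @ w)"
    by (rule pg_eq.pg_cancel)
  ultimately show ?case using Cons pg_eq.pg_trans by metis
qed

lemma winv_letters: "set (map fst (winv w)) = set (map fst w)"
  by (force simp: winv_def image_iff)

lemma presented_group_is_group: "group (presented_group G R)"
proof (rule groupI)
  fix x y assume "x \<in> carrier (presented_group G R)" "y \<in> carrier (presented_group G R)"
  then obtain u v where "x = pg_class R u" "set (map fst u) \<subseteq> G" "y = pg_class R v" "set (map fst v) \<subseteq> G"
    by (auto simp: pg_carrier)
  then show "x \<otimes>\<^bsub>presented_group G R\<^esub> y \<in> carrier (presented_group G R)"
    by (auto simp: pg_mult pg_carrier intro!: exI[of _ "u @ v"]) force+
next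
  show "\<one>\<^bsub>presented_group G R\<^esub> \<in> carrier (presented_group G R)"
    by (auto simp: pg_one pg_carrier intro!: exI[of _ "[]"])
next
  fix x y z assume "x \<in> carrier (presented_group G R)" "y \<in> carrier (presented_group G R)"
    "z \<in> carrier (presented_group G R)"
  then show "x \<otimes>\<^bsub>presented_group G R\<^esub> y \<otimes>\<^bsub>presented_group G R\<^esub> z =
     x \<otimes>\<^bsub>presented_group G R\<^esub> (y \<otimes>\<^bsub>presented_group G R\<^esub> z)"
    by (auto simp: pg_carrier pg_mult)
next
  fix x assume "x \<in> carrier (presented_group G R)"
  then show "\<one>\<^bsub>presented_group G R\<^esub> \<otimes>\<^bsub>presented_group G R\<^esub> x = x"
    by (auto simp: pg_carrier pg_mult pg_one)
next
  fix x assume "x \<in> carrier (presented_group G R)"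
  then obtain u where u: "x = pg_class R u" "set (map fst u) \<subseteq> G" by (auto simp: pg_carrier)
  show "\<exists>y\<in>carrier (presented_group G R). y \<otimes>\<^bsub>presented_group G R\<^esub> x = \<one>\<^bsub>presented_group G R\<^esub>"
    apply (rule bexI[of _ "pg_class R (winv u)"])
    using u winv_cancel[of R u] winv_letters[of u]
    by (auto simp: pg_carrier pg_mult pg_one pg_class_eq intro!: exI[of _ "winv u"] pg_eq.pg_refl) force
qed

lemma word_eval_Nil: "word_eval H f [] = \<one>\<^bsub>H\<^esub>"
  by (simp add: word_eval_def)

lemma word_eval_Cons: "word_eval H f ((g, b) # w) =
   (if b then inv\<^bsub>H\<^esub> (f g) else f g) \<otimes>\<^bsub>H\<^esub> word_eval H f w"
  by (simp add: word_eval_def)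

context group
begin

lemma word_eval_closed: "(\<And>g. f g \<in> carrier G) \<Longrightarrow> word_eval G f w \<in> carrier G"
  by (induction w) (auto simp: word_eval_Nil word_eval_Cons)

lemma word_eval_append: "(\<And>g. f g \<in> carrier G) \<Longrightarrow>
   word_eval G f (u @ v) = word_eval G f u \<otimes> word_eval G f v"
proof (induction u)
  case Nil then show ?case by (simp add: word_eval_Nil word_eval_closed)
next
  case (Cons a u)
  obtain g b where a: "a = (g, b)" by fastforce
  show ?case using Cons by (simp add: a word_eval_Cons m_assoc word_eval_closed)
qed

lemma word_eval_pg_eq:
  assumes f: "\<And>g. f g \<in> carrier G" and R: "\<And>r. r \<in> R \<Longrightarrow> word_eval G f r = \<one>"
  shows "pg_eq R u v \<Longrightarrow> word_eval G f u = word_eval G f v"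
proof (induction rule: pg_eq.induct)
  case (pg_cancel u g b v)
  have "word_eval G f [(g, b), (g, \<not> b)] = \<one>"
    using f[of g] by (auto simp: word_eval_Cons word_eval_Nil)
  then show ?case
    by (simp add: word_eval_append[OF f] word_eval_closed[OF f] m_assoc[symmetric]
        del: append.simps)
next
  case (pg_rel r u v)
  then show ?case
    by (simp add: word_eval_append[OF f] word_eval_closed[OF f] R del: append.simps)
qed auto

end

lemma word_eval_cong: "(\<And>g. g \<in> set (map fst w) \<Longrightarrow> f g = f' g) \<Longrightarrow> word_eval H f w = word_eval H f' w"
  by (induction w) (auto simp: word_eval_Nil word_eval_Cons)


lemma pg_canc: "pg_eq R (p @ (g, b) # (g, \<not> b) # q) (p @ q)"
  using pg_eq.pg_cancel[of R p g b q] by simp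

context group
begin

lemma sq_conj: "s \<in> carrier G \<Longrightarrow> w \<in> carrier G \<Longrightarrow> s \<otimes> s = \<one> \<Longrightarrow>
   (inv w \<otimes> s \<otimes> w) \<otimes> (inv w \<otimes> s \<otimes> w) = \<one>"
  by (simp add: m_assoc[symmetric]) (simp add: m_assoc)

lemma inv_invol: "y \<in> carrier G \<Longrightarrow> y \<otimes> y = \<one> \<Longrightarrow> inv y = y"
  using inv_equality by blast

lemma conj_conj: "y \<in> carrier G \<Longrightarrow> y \<otimes> y = \<one> \<Longrightarrow> v \<in> carrier G \<Longrightarrow> s \<in> carrier G \<Longrightarrow>
   y \<otimes> (inv v \<otimes> s \<otimes> v) \<otimes> y = inv (v \<otimes> y) \<otimes> s \<otimes> (v \<otimes> y)"
  by (simp add: inv_mult_group inv_invol m_assoc)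

lemma cq_back: "y \<in> carrier G \<Longrightarrow> y \<otimes> y = \<one> \<Longrightarrow> x \<in> carrier G \<Longrightarrow>
   y \<otimes> (y \<otimes> x \<otimes> y) \<otimes> y = x"
  by (simp add: m_assoc[symmetric]) (simp add: m_assoc)

lemma cq_self: "x \<in> carrier G \<Longrightarrow> x \<otimes> x = \<one> \<Longrightarrow> x \<otimes> x \<otimes> x = x"
  by simp

lemma conj_step_grp: "t \<in> carrier G \<Longrightarrow> t \<otimes> t = \<one> \<Longrightarrow> w \<in> carrier G \<Longrightarrow> x \<in> carrier G \<Longrightarrow>
   inv (t \<otimes> w) \<otimes> x \<otimes> (t \<otimes> w) = inv w \<otimes> (t \<otimes> x \<otimes> t) \<otimes> w"
  by (simp add: inv_mult_group inv_invol m_assoc)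

lemma rel_one: "y \<in> carrier G \<Longrightarrow> y \<otimes> y = \<one> \<Longrightarrow> x \<in> carrier G \<Longrightarrow>
   inv y \<otimes> (x \<otimes> (y \<otimes> (inv (y \<otimes> x \<otimes> y) \<otimes> \<one>))) = \<one>"
proof -
  assume a: "y \<in> carrier G" "y \<otimes> y = \<one>" "x \<in> carrier G"
  have yy: "y \<otimes> (y \<otimes> z) = z" if "z \<in> carrier G" for z
    using a that by (simp add: m_assoc[symmetric])
  have xx: "x \<otimes> (inv x \<otimes> z) = z" if "z \<in> carrier G" for z
    using a that by (simp add: m_assoc[symmetric])
  show ?thesis using a by (simp add: inv_mult_group inv_invol m_assoc yy xx)
qed

end

lemma W_group: "group (coxeter_group S m)"
  unfolding coxeter_group_def by (rule presented_group_is_group)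

lemma gen_carrier: "s \<in> S \<Longrightarrow> cox_gen S m s \<in> carrier (coxeter_group S m)"
  unfolding cox_gen_def pg_gen_def coxeter_group_def pg_carrier by force

lemma gen_sq:
  assumes "coxeter_matrix S m" "s \<in> S"
  shows "cox_gen S m s \<otimes>\<^bsub>coxeter_group S m\<^esub> cox_gen S m s = \<one>\<^bsub>coxeter_group S m\<^esub>"
proof -
  have "[(s, False), (s, False)] \<in> coxeter_relators S m"
    using assms unfolding coxeter_relators_def coxeter_matrix_def
    by (auto intro!: exI[of _ s] exI[of _ 1] simp: one_enat_def)
  then have "pg_eq (coxeter_relators S m) ([] @ [(s, False), (s, False)] @ []) ([] @ [])"
    by (rule pg_eq.pg_rel)
  then show ?thesis
    unfolding cox_gen_def pg_gen_def coxeter_group_def pg_mult pg_one pg_class_eq by simp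
qed

lemma gen_inv_letter:
  assumes "coxeter_matrix S m" "s \<in> S"
  shows "pg_class (coxeter_relators S m) [(s, b)] = cox_gen S m s"
proof (cases b)
  case True
  have "[(s, False), (s, False)] \<in> coxeter_relators S m"
    using assms unfolding coxeter_relators_def coxeter_matrix_def
    by (auto intro!: exI[of _ s] exI[of _ 1] simp: one_enat_def)
  then have 1: "pg_eq (coxeter_relators S m) ([(s, True)] @ [(s, False), (s, False)] @ []) ([(s, True)] @ [])"
    by (rule pg_eq.pg_rel)
  have 2: "pg_eq (coxeter_relators S m) ([] @ (s, True) # (s, \<not> True) # [(s, False)]) ([] @ [(s, False)])"
    by (rule pg_canc)
  from 1 2 show ?thesis using True unfolding cox_gen_def pg_gen_def pg_class_eq
    by simp (metis pg_eq.pg_sym pg_eq.pg_trans)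
qed (simp add: cox_gen_def pg_gen_def)

lemma Q_carrier: "x \<in> coxeter_quandle S m \<Longrightarrow> x \<in> carrier (coxeter_group S m)"
  unfolding coxeter_quandle_def
  using group.is_monoid[OF W_group] gen_carrier
  by (auto intro!: monoid.m_closed group.inv_closed[OF W_group])

lemma Q_sq:
  assumes "coxeter_matrix S m" "x \<in> coxeter_quandle S m"
  shows "x \<otimes>\<^bsub>coxeter_group S m\<^esub> x = \<one>\<^bsub>coxeter_group S m\<^esub>"
proof -
  obtain v s where v: "v \<in> carrier (coxeter_group S m)" "s \<in> S"
    "x = inv\<^bsub>coxeter_group S m\<^esub> v \<otimes>\<^bsub>coxeter_group S m\<^esub> cox_gen S m s \<otimes>\<^bsub>coxeter_group S m\<^esub> v"
    using assms(2) unfolding coxeter_quandle_def by auto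
  show ?thesis unfolding v(3)
    by (rule group.sq_conj[OF W_group gen_carrier[OF v(2)] v(1) gen_sq[OF assms(1) v(2)]])
qed

lemma Q_cq:
  assumes "coxeter_matrix S m" "x \<in> coxeter_quandle S m" "y \<in> coxeter_quandle S m"
  shows "cq_op S m x y \<in> coxeter_quandle S m"
proof -
  obtain v s where v: "v \<in> carrier (coxeter_group S m)" "s \<in> S"
    "x = inv\<^bsub>coxeter_group S m\<^esub> v \<otimes>\<^bsub>coxeter_group S m\<^esub> cox_gen S m s \<otimes>\<^bsub>coxeter_group S m\<^esub> v"
    using assms(2) unfolding coxeter_quandle_def by auto
  have y: "y \<in> carrier (coxeter_group S m)" using Q_carrier assms(3) .
  show ?thesis unfolding cq_op_def v(3)
    apply (subst group.conj_conj[OF W_group y Q_sq[OF assms(1,3)] v(1) gen_carrier[OF v(2)]])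
    unfolding coxeter_quandle_def
    using v y group.is_monoid[OF W_group] by (auto intro!: monoid.m_closed)
qed

lemma Q_back:
  assumes "coxeter_matrix S m" "x \<in> coxeter_quandle S m" "y \<in> coxeter_quandle S m"
  shows "cq_op S m (cq_op S m x y) y = x"
  unfolding cq_op_def
  using group.cq_back[OF W_group Q_carrier[OF assms(3)] Q_sq[OF assms(1,3)] Q_carrier[OF assms(2)]] .

lemma gen_Q: "s \<in> S \<Longrightarrow> cox_gen S m s \<in> coxeter_quandle S m"
  unfolding coxeter_quandle_def
  using gen_carrier[of s S m] group.is_monoid[OF W_group]
  by (auto intro!: exI[of _ "\<one>\<^bsub>coxeter_group S m\<^esub>"] exI[of _ s]
      simp: monoid.inv_one monoid.l_one monoid.r_one monoid.one_closed)


lemma A1: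
  assumes "a \<in> coxeter_quandle S m" "b \<in> coxeter_quandle S m"
  shows "pg_eq (adj_relators S m) [(b, True), (a, False), (b, False)] [(cq_op S m a b, False)]"
proof -
  let ?R = "adj_relators S m" and ?c = "cq_op S m a b"
  have r: "[(b, True), (a, False), (b, False), (?c, True)] \<in> ?R"
    using assms unfolding adj_relators_def by blast
  have 1: "pg_eq ?R ([] @ [(b, True), (a, False), (b, False), (?c, True)] @ [(?c, False)]) ([] @ [(?c, False)])"
    by (rule pg_eq.pg_rel[OF r])
  have 2: "pg_eq ?R ([(b, True), (a, False), (b, False)] @ (?c, True) # (?c, \<not> True) # [])
     ([(b, True), (a, False), (b, False)] @ [])"
    by (rule pg_canc)
  from 1 2 show ?thesis by simp (rule pg_eq.pg_trans[OF pg_eq.pg_sym])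
qed

lemma A2:
  assumes cm: "coxeter_matrix S m" and "a \<in> coxeter_quandle S m" "b \<in> coxeter_quandle S m"
  shows "pg_eq (adj_relators S m) [(b, False), (a, False), (a, False)] [(a, False), (a, False), (b, False)]"
proof -
  let ?R = "adj_relators S m" and ?c = "cq_op S m b a"
  have c: "?c \<in> coxeter_quandle S m" using Q_cq[OF cm assms(3,2)] .
  have 1: "pg_eq ?R [(a, True), (b, False), (a, False)] [(?c, False)]" using A1[OF assms(3,2)] .
  have 2: "pg_eq ?R [(a, True), (?c, False), (a, False)] [(b, False)]"
    using A1[OF c assms(2)] Q_back[OF cm assms(3,2)] by simp
  have 3: "pg_eq ?R ([(a, True)] @ [(a, True), (b, False), (a, False)] @ [(a, False)])
     ([(a, True)] @ [(?c, False)] @ [(a, False)])"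
    by (rule pg_eq_cong[OF 1])
  have 4: "pg_eq ?R [(a, True), (a, True), (b, False), (a, False), (a, False)] [(b, False)]"
    using pg_eq.pg_trans[OF 3[simplified] 2] .
  have 5: "pg_eq ?R ([(a, False), (a, False)] @ [(a, True), (a, True), (b, False), (a, False), (a, False)] @ [])
     ([(a, False), (a, False)] @ [(b, False)] @ [])"
    by (rule pg_eq_cong[OF 4])
  have 6: "pg_eq ?R ([(a, False)] @ (a, False) # (a, \<not> False) # [(a, True), (b, False), (a, False), (a, False)])
     ([(a, False)] @ [(a, True), (b, False), (a, False), (a, False)])"
    by (rule pg_canc)
  have 7: "pg_eq ?R ([] @ (a, False) # (a, \<not> False) # [(b, False), (a, False), (a, False)])
     ([] @ [(b, False), (a, False), (a, False)])"
    by (rule pg_canc)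
  show ?thesis
    using pg_eq.pg_trans[OF pg_eq.pg_sym[OF 7[simplified]] pg_eq.pg_trans[OF pg_eq.pg_sym[OF 6[simplified]] 5[simplified]]] .
qed

lemma A3:
  assumes cm: "coxeter_matrix S m" and "a \<in> coxeter_quandle S m" "b \<in> coxeter_quandle S m"
  shows "pg_eq (adj_relators S m) [(cq_op S m a b, False), (cq_op S m a b, False)] [(a, False), (a, False)]"
proof -
  let ?R = "adj_relators S m" and ?c = "cq_op S m a b"
  have 1: "pg_eq ?R ([(?c, False)] @ [(?c, False)]) ([(b, True), (a, False), (b, False)] @ [(b, True), (a, False), (b, False)])"
    using pg_eq_app[OF pg_eq.pg_sym[OF A1[OF assms(2,3)]] pg_eq.pg_sym[OF A1[OF assms(2,3)]]] .
  have 2: "pg_eq ?R ([(b, True), (a, False)] @ (b, False) # (b, \<not> False) # [(a, False), (b, False)])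
     ([(b, True), (a, False)] @ [(a, False), (b, False)])"
    by (rule pg_canc)
  have 3: "pg_eq ?R ([(b, True)] @ [(a, False), (a, False), (b, False)] @ [])
     ([(b, True)] @ [(b, False), (a, False), (a, False)] @ [])"
    by (rule pg_eq_cong[OF pg_eq.pg_sym[OF A2[OF cm assms(2,3)]]])
  have 4: "pg_eq ?R ([] @ (b, True) # (b, \<not> True) # [(a, False), (a, False)])
     ([] @ [(a, False), (a, False)])"
    by (rule pg_canc)
  show ?thesis
    using pg_eq.pg_trans[OF 1[simplified] pg_eq.pg_trans[OF 2[simplified] pg_eq.pg_trans[OF 3[simplified] 4[simplified]]]] .
qed


lemma W_carrier_word: "w \<in> carrier (coxeter_group S m) \<Longrightarrow>
   \<exists>u. w = pg_class (coxeter_relators S m) u \<and> set (map fst u) \<subseteq> S"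
  unfolding coxeter_group_def pg_carrier by blast

lemma conj_step:
  assumes cm: "coxeter_matrix S m"
  shows "set (map fst u) \<subseteq> S \<Longrightarrow> x \<in> coxeter_quandle S m \<Longrightarrow>
    inv\<^bsub>coxeter_group S m\<^esub> (pg_class (coxeter_relators S m) u) \<otimes>\<^bsub>coxeter_group S m\<^esub> x
      \<otimes>\<^bsub>coxeter_group S m\<^esub> pg_class (coxeter_relators S m) u \<in> coxeter_quandle S m
    \<and> pg_eq (adj_relators S m)
      [(inv\<^bsub>coxeter_group S m\<^esub> (pg_class (coxeter_relators S m) u) \<otimes>\<^bsub>coxeter_group S m\<^esub> x
      \<otimes>\<^bsub>coxeter_group S m\<^esub> pg_class (coxeter_relators S m) u, False),
       (inv\<^bsub>coxeter_group S m\<^esub> (pg_class (coxeter_relators S m) u) \<otimes>\<^bsub>coxeter_group S m\<^esub> x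
      \<otimes>\<^bsub>coxeter_group S m\<^esub> pg_class (coxeter_relators S m) u, False)] [(x, False), (x, False)]"
proof (induction u arbitrary: x)
  case Nil
  have "pg_class (coxeter_relators S m) [] = \<one>\<^bsub>coxeter_group S m\<^esub>"
    by (simp add: coxeter_group_def pg_one)
  moreover have "inv\<^bsub>coxeter_group S m\<^esub> \<one>\<^bsub>coxeter_group S m\<^esub> \<otimes>\<^bsub>coxeter_group S m\<^esub> x
      \<otimes>\<^bsub>coxeter_group S m\<^esub> \<one>\<^bsub>coxeter_group S m\<^esub> = x"
    using Q_carrier[OF Nil(2)]
    by (simp add: monoid.l_one[OF group.is_monoid[OF W_group]] monoid.r_one[OF group.is_monoid[OF W_group]]
      monoid.inv_one[OF group.is_monoid[OF W_group]] monoid.one_closed[OF group.is_monoid[OF W_group]])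
  ultimately show ?case using Nil(2) by (simp add: pg_eq.pg_refl)
next
  case (Cons a u)
  obtain s b where a: "a = (s, b)" by fastforce
  have s: "s \<in> S" and u: "set (map fst u) \<subseteq> S" using Cons(2) a by auto
  let ?W = "coxeter_group S m" and ?t = "cox_gen S m s" and ?w = "pg_class (coxeter_relators S m) u"
  have wc: "?w \<in> carrier ?W" using u unfolding coxeter_group_def pg_carrier by blast
  have "pg_class (coxeter_relators S m) (a # u) = pg_class (coxeter_relators S m) ([(s, b)] @ u)"
    by (simp add: a)
  also have "\<dots> = ?t \<otimes>\<^bsub>?W\<^esub> ?w"
    using gen_inv_letter[OF cm s, of b] pg_mult[of S "coxeter_relators S m" "[(s, b)]" u]
    by (simp add: coxeter_group_def)
  finally have eq: "pg_class (coxeter_relators S m) (a # u) = ?t \<otimes>\<^bsub>?W\<^esub> ?w" .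
  have xc: "x \<in> carrier ?W" using Q_carrier[OF Cons(3)] .
  have conj: "inv\<^bsub>?W\<^esub> (?t \<otimes>\<^bsub>?W\<^esub> ?w) \<otimes>\<^bsub>?W\<^esub> x \<otimes>\<^bsub>?W\<^esub> (?t \<otimes>\<^bsub>?W\<^esub> ?w)
     = inv\<^bsub>?W\<^esub> ?w \<otimes>\<^bsub>?W\<^esub> cq_op S m x ?t \<otimes>\<^bsub>?W\<^esub> ?w"
    unfolding cq_op_def
    by (rule group.conj_step_grp[OF W_group gen_carrier[OF s] gen_sq[OF cm s] wc xc])
  have x': "cq_op S m x ?t \<in> coxeter_quandle S m" using Q_cq[OF cm Cons(3) gen_Q[OF s]] .
  have A: "pg_eq (adj_relators S m) [(cq_op S m x ?t, False), (cq_op S m x ?t, False)] [(x, False), (x, False)]"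
    using A3[OF cm Cons(3) gen_Q[OF s]] .
  show ?case unfolding eq conj
    using Cons.IH[OF u x'] A pg_eq.pg_trans by blast
qed

lemma phi_eval:
  assumes cm: "coxeter_matrix S m" and w0: "set (map fst w0) \<subseteq> coxeter_quandle S m"
  shows "adj_phi S m (pg_class (adj_relators S m) w0) = word_eval (coxeter_group S m) id w0"
proof -
  let ?W = "coxeter_group S m" and ?Q = "coxeter_quandle S m" and ?R = "adj_relators S m"
  define f where "f g = (if g \<in> ?Q then g else \<one>\<^bsub>?W\<^esub>)" for g
  have f: "f g \<in> carrier ?W" for g
    unfolding f_def using Q_carrier monoid.one_closed[OF group.is_monoid[OF W_group]] by auto
  have R: "word_eval ?W f r = \<one>\<^bsub>?W\<^esub>" if rR: "r \<in> ?R" for r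
  proof -
    obtain x y where r: "r = [(y, True), (x, False), (y, False), (cq_op S m x y, True)]"
      and x: "x \<in> ?Q" and y: "y \<in> ?Q"
      using rR unfolding adj_relators_def by blast
    have c: "cq_op S m x y \<in> ?Q" using Q_cq[OF cm x y] .
    show ?thesis unfolding r using x y c
      by (simp add: word_eval_Cons word_eval_Nil f_def cq_op_def
          group.rel_one[OF W_group Q_carrier[OF y] Q_sq[OF cm y] Q_carrier[OF x]])
  qed
  let ?P = "\<lambda>w. w \<in> pg_class ?R w0 \<and> set (map fst w) \<subseteq> ?Q"
  have ex: "\<exists>w. ?P w" using w0 by (auto simp: pg_class_def intro: pg_eq.pg_refl)
  define w where "w = (SOME w. ?P w)"
  have Pw: "?P w" unfolding w_def using someI_ex[OF ex] .
  have "adj_phi S m (pg_class ?R w0) = word_eval ?W id w"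
    by (simp add: adj_phi_def pg_induced_def w_def)
  also have "\<dots> = word_eval ?W f w"
    using Pw by (intro word_eval_cong) (auto simp: f_def)
  also have "\<dots> = word_eval ?W f w0"
    using group.word_eval_pg_eq[OF W_group f R] Pw by (metis mem_Collect_eq pg_class_def)
  also have "\<dots> = word_eval ?W id w0"
    using w0 by (intro word_eval_cong) (auto simp: f_def)
  finally show ?thesis .
qed

theorem lemma2p6:
  fixes S :: "'a set" and m :: "'a \<Rightarrow> 'a \<Rightarrow> enat"
  assumes "coxeter_matrix S m"
    and "x \<in> coxeter_quandle S m" and "y \<in> coxeter_quandle S m"
    and "\<exists>w\<in>carrier (coxeter_group S m).
           y = inv\<^bsub>coxeter_group S m\<^esub> w \<otimes>\<^bsub>coxeter_group S m\<^esub> x \<otimes>\<^bsub>coxeter_group S m\<^esub> w"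
  shows "adj_gen S m x \<otimes>\<^bsub>adj_group S m\<^esub> adj_gen S m x
           = adj_gen S m y \<otimes>\<^bsub>adj_group S m\<^esub> adj_gen S m y
         \<and> adj_gen S m x \<otimes>\<^bsub>adj_group S m\<^esub> adj_gen S m x
             \<in> kernel (adj_group S m) (coxeter_group S m) (adj_phi S m)"
proof -
  have sq: "adj_gen S m z \<otimes>\<^bsub>adj_group S m\<^esub> adj_gen S m z = pg_class (adj_relators S m) [(z, False), (z, False)]" for z
    unfolding adj_group_def adj_gen_def pg_gen_def pg_mult by simp
  obtain w where w: "w \<in> carrier (coxeter_group S m)"
    "y = inv\<^bsub>coxeter_group S m\<^esub> w \<otimes>\<^bsub>coxeter_group S m\<^esub> x \<otimes>\<^bsub>coxeter_group S m\<^esub> w"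
    using assms(4) by blast
  obtain u where u: "w = pg_class (coxeter_relators S m) u" "set (map fst u) \<subseteq> S"
    using W_carrier_word[OF w(1)] by blast
  have e: "pg_eq (adj_relators S m) [(y, False), (y, False)] [(x, False), (x, False)]"
    using conj_step[OF assms(1) u(2) assms(2)] w(2) u(1) by simp
  have part1: "adj_gen S m x \<otimes>\<^bsub>adj_group S m\<^esub> adj_gen S m x
           = adj_gen S m y \<otimes>\<^bsub>adj_group S m\<^esub> adj_gen S m y"
    unfolding sq pg_class_eq using e by (rule pg_eq.pg_sym)
  have car: "pg_class (adj_relators S m) [(x, False), (x, False)] \<in> carrier (adj_group S m)"
    unfolding adj_group_def pg_carrier using assms(2) by force
  have ph: "adj_phi S m (pg_class (adj_relators S m) [(x, False), (x, False)]) = \<one>\<^bsub>coxeter_group S m\<^esub>"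
    using phi_eval[OF assms(1), of "[(x, False), (x, False)]"] assms(2)
      Q_sq[OF assms(1,2)] Q_carrier[OF assms(2)] group.is_monoid[OF W_group]
    by (simp add: word_eval_Cons word_eval_Nil monoid.r_one[OF group.is_monoid[OF W_group]])
  show ?thesis using part1 car ph unfolding sq kernel_def by simp
qed

end
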